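(* There exist a rational polyhedron $P=\{x\in\mathbb{R}^n: Ax\le b,\ 0\le x_i\le u_i \text{ for } i\in I\}$, with $I=\{1,\dots,l\}$ the index set of integer variables, and a binarization scheme $\mathcal{B}=(B^1,\dots,B^l)$ in which every $B^i$ is a non-affine binarization polytope, such that \[\mathrm{SC}(P,I)\subsetneq\operatorname{proj}_x\big(\mathrm{SC}(P_{\mathcal{B}},I')\big),\qquad\text{where } I'=I_{\mathcal{B}}\setminus I.\]
   Context: Binarization polytopes: for positive integers $q,u$, $\Gamma^q_u$ is the set of rational polytopes $B\subseteq\{(x,z)\in\mathbb{R}\times[0,1]^q:0\le x\le u\}$ with $\operatorname{proj}_x(B\cap(\mathbb{R}\times\{0,1\}^q))=\{0,1,\dots,u\}$. $B\in\Gamma^q_u$ is affine if there are $\alpha\in\mathbb{R}^q$, $\alpha_0\in\mathbb{R}$ with $x=\alpha^Tz+\alpha_0$ for all $(x,z)\in B$. A binarization scheme is $\mathcal{B}=(B^1,\dots,B^l)$ with $B^i\in\Gamma^{q_i}_{u_i}$; with $q=\sum_iq_i$, $P_{\mathcal{B}}=\{(x,z)\in\mathbb{R}^n\times\mathbb{R}^q: x\in P,\ (x_i,z_i)\in B^i\text{ for } i\in I\}$ where $z=(z_1,\dots,z_l)$, $z_i\in\mathbb{R}^{q_i}$, and $I_{\mathcal{B}}=\{1,\dots,l,n+1,\dots,n+q\}$; thus $I'=\{n+1,\dots,n+q\}$ indexes only the new variables. Split closure: for $J\subseteq\{1,\dots,N\}$ and $X\subseteq\mathbb{R}^N$, $\mathrm{SC}(X,J)=\bigcap\mathrm{conv}(X\setminus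 S)$ over all $S=\{y:\pi_0<\pi^Ty<\pi_0+1\}$ with $\pi\in\mathbb{Z}^N$, $\pi_j=0$ for $j\notin J$, $\pi_0\in\mathbb{Z}$. $\operatorname{proj}_x$ is orthogonal projection onto the $x$-coordinates. *)

theory Defs
  imports "HOL-Analysis.Analysis"
begin

text \<open>Conventions. A point of R^N is encoded as a function y :: nat => real whose
coordinates are y 1, ..., y N (1-indexed, as in the paper); all other values are 0.\<close>

definition Rn :: "nat \<Rightarrow> (nat \<Rightarrow> real) set" where
  "Rn N = {y. \<forall>j. (j = 0 \<or> N < j) \<longrightarrow> y j = 0}"

definition conv :: "(nat \<Rightarrow> real) set \<Rightarrow> (nat \<Rightarrow> real) set" where
  "conv X = {y. \<exists>S c. finite S \<and> S \<subseteq> X \<and> (\<forall>x\<in>S. 0 \<le> c x) \<and> sum c S = 1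
                  \<and> y = (\<lambda>j. \<Sum>x\<in>S. c x * x j)}"

definition split_closure :: "nat \<Rightarrow> (nat \<Rightarrow> real) set \<Rightarrow> nat set \<Rightarrow> (nat \<Rightarrow> real) set" where
  "split_closure N X J =
     (\<Inter>{conv (X - {y. real_of_int \<pi>0 < (\<Sum>j=1..N. real_of_int (\<pi> j) * y j)
                        \<and> (\<Sum>j=1..N. real_of_int (\<pi> j) * y j) < real_of_int \<pi>0 + 1})
        | \<pi> \<pi>0. \<forall>j\<in>{1..N}. j \<notin> J \<longrightarrow> \<pi> j = 0})"

definition proj :: "nat \<Rightarrow> (nat \<Rightarrow> real) set \<Rightarrow> (nat \<Rightarrow> real) set" where
  "proj n Y = (\<lambda>y. \<lambda>j. if 1 \<le> j \<and> j \<le> n then y j else 0) ` Y"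

definition rational_polytope :: "nat \<Rightarrow> (nat \<Rightarrow> real) set \<Rightarrow> bool" where
  "rational_polytope N B \<longleftrightarrow>
     (\<exists>V. finite V \<and> V \<subseteq> Rn N \<and> (\<forall>v\<in>V. \<forall>j. v j \<in> \<rat>) \<and> B = conv V)"

text \<open>Binarization polytopes Gamma^q_u, in R^(1+q): coordinate 1 is x,
coordinates 2..q+1 are z_1..z_q.\<close>
definition binarization_polytope :: "nat \<Rightarrow> nat \<Rightarrow> (nat \<Rightarrow> real) set \<Rightarrow> bool" where
  "binarization_polytope q u B \<longleftrightarrow>
     rational_polytope (q + 1) B \<and>
     B \<subseteq> {y \<in> Rn (q + 1). 0 \<le> y 1 \<and> y 1 \<le> real u \<and> (\<forall>j\<in>{2..q+1}. 0 \<le> y j \<and> y j \<le> 1)} \<and>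
     (\<lambda>y. y 1) ` {y \<in> B. \<forall>j\<in>{2..q+1}. y j \<in> {0, 1}} = real ` {0..u}"

definition affine_binarization :: "nat \<Rightarrow> (nat \<Rightarrow> real) set \<Rightarrow> bool" where
  "affine_binarization q B \<longleftrightarrow>
     (\<exists>\<alpha> :: nat \<Rightarrow> real. \<exists>\<alpha>0 :: real. \<forall>y\<in>B. y 1 = (\<Sum>j=1..q. \<alpha> j * y (j + 1)) + \<alpha>0)"

definition polyhedron_P :: "nat \<Rightarrow> nat \<Rightarrow> (nat \<Rightarrow> nat) \<Rightarrow> nat \<Rightarrow> (nat \<Rightarrow> nat \<Rightarrow> real)
      \<Rightarrow> (nat \<Rightarrow> real) \<Rightarrow> (nat \<Rightarrow> real) set" where
  "polyhedron_P n l u m A b =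
     {x \<in> Rn n. (\<forall>k\<in>{1..m}. (\<Sum>j=1..n. A k j * x j) \<le> b k)
              \<and> (\<forall>i\<in>{1..l}. 0 \<le> x i \<and> x i \<le> real (u i))}"

text \<open>Offset: z_i occupies coordinates off+1 .. off+q_i with off = n + q_1 + ... + q_(i-1).\<close>
definition zoff :: "nat \<Rightarrow> (nat \<Rightarrow> nat) \<Rightarrow> nat \<Rightarrow> nat" where
  "zoff n q i = n + (\<Sum>k\<in>{1..<i}. q k)"

definition total_q :: "nat \<Rightarrow> (nat \<Rightarrow> nat) \<Rightarrow> nat" where
  "total_q l q = (\<Sum>k\<in>{1..l}. q k)"

definition pair_i :: "nat \<Rightarrow> (nat \<Rightarrow> nat) \<Rightarrow> nat \<Rightarrow> (nat \<Rightarrow> real) \<Rightarrow> (nat \<Rightarrow> real)" where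
  "pair_i n q i y = (\<lambda>j. if j = 1 then y i
                          else if 2 \<le> j \<and> j \<le> q i + 1 then y (zoff n q i + (j - 1)) else 0)"

definition binarized :: "nat \<Rightarrow> nat \<Rightarrow> (nat \<Rightarrow> nat) \<Rightarrow> (nat \<Rightarrow> (nat \<Rightarrow> real) set)
      \<Rightarrow> (nat \<Rightarrow> real) set \<Rightarrow> (nat \<Rightarrow> real) set" where
  "binarized n l q B P =
     {y \<in> Rn (n + total_q l q). proj n {y} \<subseteq> P \<and> (\<forall>i\<in>{1..l}. pair_i n q i y \<in> B i)}"

definition I_B :: "nat \<Rightarrow> nat \<Rightarrow> (nat \<Rightarrow> nat) \<Rightarrow> nat set" where
  "I_B n l q = {1..l} \<union> {n+1..n + total_q l q}"

end

theory Submission imports Defs begin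
lemma sum3: "(\<Sum>j=1..3::nat. f j) = f 1 + f 2 + (f 3::real)"
proof -
  have "{1..3::nat} = {1,2,3}" by auto
  then show ?thesis by simp
qed
lemma sum2: "(\<Sum>j=1..2::nat. f j) = f 1 + (f 2::real)"
proof -
  have "{1..2::nat} = {1,2}" by auto
  then show ?thesis by simp
qed

lemma conv_empty: "conv {} = {}"
  unfolding conv_def by auto

lemma in_conv: "a \<in> X \<Longrightarrow> a \<in> conv X"
  unfolding conv_def
  by (rule CollectI, rule exI[of _ "{a}"], rule exI[of _ "\<lambda>_. 1"]) auto

lemma mid_conv: assumes "a \<in> X" "b \<in> X" "a \<noteq> b"
  shows "(\<lambda>j. a j / 2 + b j / 2) \<in> conv X"
  unfolding conv_def
  apply (rule CollectI, rule exI[of _ "{a,b}"], rule exI[of _ "\<lambda>_. 1/2"])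
  using assms by auto

lemma conv_ineq:
  assumes "\<forall>x\<in>X. a1 * x 1 + a2 * x 2 + a3 * x 3 \<le> (\<beta>::real)" "y \<in> conv X"
  shows "a1 * y 1 + a2 * y 2 + a3 * y 3 \<le> \<beta>"
proof -
  obtain S c where S: "finite S" "S \<subseteq> X" "\<forall>x\<in>S. 0 \<le> c x" "sum c S = 1"
    "y = (\<lambda>j. \<Sum>x\<in>S. c x * x j)" using assms(2) unfolding conv_def by blast
  have "a1 * y 1 + a2 * y 2 + a3 * y 3 = (\<Sum>x\<in>S. c x * (a1 * x 1 + a2 * x 2 + a3 * x 3))"
    by (simp add: S(5) sum_distrib_left sum.distrib algebra_simps)
  also have "\<dots> \<le> (\<Sum>x\<in>S. c x * \<beta>)"
    by (rule sum_mono) (use S assms(1) in \<open>auto intro: mult_left_mono\<close>)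
  also have "\<dots> = \<beta>" using S(4) by (simp add: sum_distrib_right[symmetric])
  finally show ?thesis .
qed

lemma conv_Rn: assumes "X \<subseteq> Rn N" shows "conv X \<subseteq> Rn N"
proof
  fix y assume "y \<in> conv X"
  then obtain S c where S: "S \<subseteq> X" "y = (\<lambda>j. \<Sum>x\<in>S. c x * x j)" unfolding conv_def by blast
  have "\<And>x j. x \<in> S \<Longrightarrow> (j = 0 \<or> N < j) \<Longrightarrow> x j = 0" using S assms by (auto simp: Rn_def)
  then show "y \<in> Rn N" unfolding Rn_def using S by (auto intro!: sum.neutral)
qed

definition pt :: "real \<Rightarrow> real \<Rightarrow> real \<Rightarrow> nat \<Rightarrow> real" where
  "pt x a c = (\<lambda>j. if j = 1 then x else if j = 2 then a else if j = 3 then c else 0)"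

definition VV :: "(nat \<Rightarrow> real) set" where
  "VV = {pt 0 0 0, pt 0 1 1, pt 1 1 0, pt 1 0 1}"

definition BB :: "(nat \<Rightarrow> real) set" where "BB = conv VV"

lemma pt_simps[simp]: "pt x a c 1 = x" "pt x a c 2 = a" "pt x a c 3 = c"
  "pt x a c 0 = 0" "pt x a c (Suc 0) = x" "j > 3 \<Longrightarrow> pt x a c j = 0"
  by (auto simp: pt_def)

lemma pt_Rn: "pt x a c \<in> Rn 3" by (auto simp: Rn_def)

lemma pt_eq_iff: "pt x a c = pt x' a' c' \<longleftrightarrow> x = x' \<and> a = a' \<and> c = c'"
  by (metis pt_simps(1,2,3))

lemma pt_mid: "(\<lambda>j. pt x a c j / 2 + pt x' a' c' j / 2) = pt ((x+x')/2) ((a+a')/2) ((c+c')/2)"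
  by (rule ext) (auto simp: pt_def)

lemma VV_ineq: assumes "\<And>x a c. pt x a c \<in> VV \<Longrightarrow> a1 * x + a2 * a + a3 * c \<le> \<beta>"
  and "y \<in> BB" shows "a1 * y 1 + a2 * y 2 + a3 * y 3 \<le> \<beta>"
  using assms(2) unfolding BB_def
  by (rule conv_ineq[rotated]) (use assms(1)[of 0 0 0] assms(1)[of 0 1 1] assms(1)[of 1 1 0] assms(1)[of 1 0 1] in \<open>auto simp: VV_def\<close>)

lemma BB_Rn: "BB \<subseteq> Rn 3"
  unfolding BB_def by (rule conv_Rn) (auto simp: VV_def pt_Rn)

lemma mid_BB: "pt x a c \<in> VV \<Longrightarrow> pt x' a' c' \<in> VV \<Longrightarrow> pt x a c \<noteq> pt x' a' c' \<Longrightarrow>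
   pt ((x+x')/2) ((a+a')/2) ((c+c')/2) \<in> BB"
  unfolding BB_def using mid_conv[of "pt x a c" VV "pt x' a' c'"] pt_mid by metis

lemma B1: "pt (1/2) 0 (1/2) \<in> BB" using mid_BB[of 0 0 0 1 0 1] by (simp add: VV_def pt_eq_iff)
lemma B2: "pt (1/2) 1 (1/2) \<in> BB" using mid_BB[of 0 1 1 1 1 0] by (simp add: VV_def pt_eq_iff)
lemma B3: "pt (1/2) (1/2) 0 \<in> BB" using mid_BB[of 0 0 0 1 1 0] by (simp add: VV_def pt_eq_iff)
lemma B4: "pt (1/2) (1/2) 1 \<in> BB" using mid_BB[of 0 1 1 1 0 1] by (simp add: VV_def pt_eq_iff)
lemma B0: "pt (1/2) (1/2) (1/2) \<in> BB"
proof -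
  have "pt (1/2) (1/2) (1/2) = (\<lambda>j. \<Sum>x\<in>VV. 1/4 * x j)"
    by (rule ext) (simp add: VV_def pt_eq_iff, simp add: pt_def)
  moreover have "sum (\<lambda>_. 1/4::real) VV = 1" by (simp add: VV_def pt_eq_iff)
  ultimately show ?thesis unfolding BB_def conv_def
    by (intro CollectI exI[of _ VV] exI[of _ "\<lambda>_. 1/4::real"]) (auto simp: VV_def)
qed

lemma binBB: "binarization_polytope 2 1 BB"
proof -
  have rp: "rational_polytope 3 BB" unfolding rational_polytope_def BB_def
    by (rule exI[of _ VV]) (simp add: VV_def pt_Rn, auto simp: pt_def)
  have box: "BB \<subseteq> {y \<in> Rn (2 + 1). 0 \<le> y 1 \<and> y 1 \<le> real 1 \<and> (\<forall>j\<in>{2..2+1}. 0 \<le> y j \<and> y j \<le> 1)}"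
  proof
    fix y assume y: "y \<in> BB"
    have "-1 * y 1 + 0 * y 2 + 0 * y 3 \<le> 0" by (rule VV_ineq[OF _ y]) (auto simp: VV_def pt_eq_iff)
    moreover have "1 * y 1 + 0 * y 2 + 0 * y 3 \<le> 1" by (rule VV_ineq[OF _ y]) (auto simp: VV_def pt_eq_iff)
    moreover have "0 * y 1 + -1 * y 2 + 0 * y 3 \<le> 0" by (rule VV_ineq[OF _ y]) (auto simp: VV_def pt_eq_iff)
    moreover have "0 * y 1 + 1 * y 2 + 0 * y 3 \<le> 1" by (rule VV_ineq[OF _ y]) (auto simp: VV_def pt_eq_iff)
    moreover have "0 * y 1 + 0 * y 2 + -1 * y 3 \<le> 0" by (rule VV_ineq[OF _ y]) (auto simp: VV_def pt_eq_iff)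
    moreover have "0 * y 1 + 0 * y 2 + 1 * y 3 \<le> 1" by (rule VV_ineq[OF _ y]) (auto simp: VV_def pt_eq_iff)
    moreover have "{2..2+1::nat} = {2,3}" by auto
    ultimately show "y \<in> {y \<in> Rn (2 + 1). 0 \<le> y 1 \<and> y 1 \<le> real 1 \<and> (\<forall>j\<in>{2..2+1}. 0 \<le> y j \<and> y j \<le> 1)}"
      using y BB_Rn by auto
  qed
  have e23: "{2..2+1::nat} = {2,3}" by auto
  have img: "(\<lambda>y. y 1) ` {y \<in> BB. \<forall>j\<in>{2..2+1}. y j \<in> {0, 1}} = real ` {0..1}"
  proof
    show "(\<lambda>y. y 1) ` {y \<in> BB. \<forall>j\<in>{2..2+1}. y j \<in> {0, 1}} \<subseteq> real ` {0..1}"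
    proof clarify
      fix y assume y: "y \<in> BB" and bin: "\<forall>j\<in>{2..2+1}. y j \<in> {0::real, 1}"
      have "-1 * y 1 + 1 * y 2 + -1 * y 3 \<le> 0"
        by (rule VV_ineq[OF _ y]) (auto simp: VV_def pt_eq_iff)
      moreover have "-1 * y 1 + -1 * y 2 + 1 * y 3 \<le> 0"
        by (rule VV_ineq[OF _ y]) (auto simp: VV_def pt_eq_iff)
      moreover have "1 * y 1 + -1 * y 2 + -1 * y 3 \<le> 0"
        by (rule VV_ineq[OF _ y]) (auto simp: VV_def pt_eq_iff)
      moreover have "1 * y 1 + 1 * y 2 + 1 * y 3 \<le> 2"
        by (rule VV_ineq[OF _ y]) (auto simp: VV_def pt_eq_iff)
      moreover have "y 2 \<in> {0,1}" "y 3 \<in> {0,1}" using bin e23 by auto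
      ultimately have "y 1 = 0 \<or> y 1 = 1" by auto
      then show "y 1 \<in> real ` {0..1}" by (auto simp: image_iff)
    qed
    have v0: "pt 0 0 0 \<in> BB" "pt 1 1 0 \<in> BB" unfolding BB_def by (auto intro!: in_conv simp: VV_def)
    show "real ` {0..1} \<subseteq> (\<lambda>y. y 1) ` {y \<in> BB. \<forall>j\<in>{2..2+1}. y j \<in> {0, 1}}"
    proof
      fix t assume "t \<in> real ` {0..1::nat}"
      then have "t = 0 \<or> t = 1" by auto
      then show "t \<in> (\<lambda>y. y 1) ` {y \<in> BB. \<forall>j\<in>{2..2+1}. y j \<in> {0, 1}}"
      proof
        assume "t = 0" then show ?thesis using v0 e23
          by (auto intro!: image_eqI[of _ _ "pt 0 0 0"])
      next
        assume "t = 1" then show ?thesis using v0 e23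
          by (auto intro!: image_eqI[of _ _ "pt 1 1 0"])
      qed
    qed
  qed
  show ?thesis unfolding binarization_polytope_def using rp box img by simp
qed

lemma nonaff: "\<not> affine_binarization 2 BB"
proof
  assume "affine_binarization 2 BB"
  then obtain \<alpha> \<alpha>0 where h: "\<forall>y\<in>BB. y 1 = (\<Sum>j=1..2. \<alpha> j * y (j + 1)) + \<alpha>0"
    unfolding affine_binarization_def by blast
  have v: "pt 0 0 0 \<in> BB" "pt 0 1 1 \<in> BB" "pt 1 1 0 \<in> BB" "pt 1 0 1 \<in> BB"
    unfolding BB_def by (auto intro!: in_conv simp: VV_def)
  have "\<And>y. y \<in> BB \<Longrightarrow> y 1 = \<alpha> 1 * y 2 + \<alpha> 2 * y 3 + \<alpha>0"
    using h by (simp add: sum2 numeral_3_eq_3 numeral_2_eq_2)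
  from this[OF v(1)] this[OF v(2)] this[OF v(3)] this[OF v(4)] show False by simp
qed

definition uu :: "nat \<Rightarrow> nat" where "uu = (\<lambda>_. 1)"
definition qq :: "nat \<Rightarrow> nat" where "qq = (\<lambda>_. 2)"
definition AA :: "nat \<Rightarrow> nat \<Rightarrow> real" where "AA = (\<lambda>k j. if k = 1 then 1 else -1)"
definition bb :: "nat \<Rightarrow> real" where "bb = (\<lambda>k. if k = 1 then 1/2 else -1/2)"
definition PP where "PP = polyhedron_P 1 1 uu 2 AA bb"

lemma PP_half: "x \<in> PP \<Longrightarrow> x 1 = 1/2"
proof -
  assume "x \<in> PP"
  then have h: "\<forall>k\<in>{1..2}. (\<Sum>j=1..1. AA k j * x j) \<le> bb k"
    unfolding PP_def polyhedron_P_def by auto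
  from h[rule_format, of 1] h[rule_format, of 2] show ?thesis by (simp add: AA_def bb_def)
qed

lemma SC_P_empty: "split_closure 1 PP {1..1} = {}"
proof -
  let ?S = "conv (PP - {y. real_of_int 0 < (\<Sum>j=1..1. real_of_int ((\<lambda>_. 1::int) j) * y j)
                        \<and> (\<Sum>j=1..1. real_of_int ((\<lambda>_. 1::int) j) * y j) < real_of_int 0 + 1})"
  have "split_closure 1 PP {1..1} \<subseteq> ?S"
    unfolding split_closure_def
    by (rule Inter_lower, rule CollectI, rule exI[of _ "\<lambda>_. 1::int"], rule exI[of _ 0]) simp
  moreover have "PP - {y. real_of_int 0 < (\<Sum>j=1..1. real_of_int ((\<lambda>_. 1::int) j) * y j)
                        \<and> (\<Sum>j=1..1. real_of_int ((\<lambda>_. 1::int) j) * y j) < real_of_int 0 + 1} = {}"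
    by (auto dest!: PP_half)
  ultimately show ?thesis using conv_empty by (metis subset_empty)
qed

lemma tq: "total_q 1 qq = 2" by (simp add: total_q_def qq_def)

lemma in_PB: assumes "pt (1/2) a c \<in> BB" shows "pt (1/2) a c \<in> binarized 1 1 qq (\<lambda>_. BB) PP"
proof -
  have pr: "proj 1 {pt (1/2) a c} = {\<lambda>j. if j = 1 then 1/2 else 0}"
    unfolding proj_def by (auto intro!: ext simp: pt_def)
  have "(\<lambda>j. if j = 1 then 1/2 else 0 :: real) \<in> PP"
    unfolding PP_def polyhedron_P_def by (auto simp: Rn_def AA_def bb_def uu_def)
  moreover have "pair_i 1 qq 1 (pt (1/2) a c) = pt (1/2) a c"
    by (rule ext) (auto simp: pair_i_def zoff_def qq_def pt_def)
  moreover have e: "1 + total_q 1 qq = 3" by (simp add: total_q_def qq_def)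
  moreover have "pt (1/2) a c \<in> Rn (1 + total_q 1 qq)" unfolding e by (rule pt_Rn)
  ultimately show ?thesis unfolding binarized_def using pr assms by auto
qed

lemma half_strip: "(real_of_int p < real_of_int a / 2 \<and> real_of_int a / 2 < real_of_int p + 1) \<longleftrightarrow> a = 2*p+1"
proof -
  have 1: "real_of_int p < real_of_int a / 2 \<longleftrightarrow> 2*p < a"
  proof -
    have "real_of_int p < real_of_int a / 2 \<longleftrightarrow> real_of_int (2*p) < real_of_int a" by (simp add: mult.commute)
    also have "\<dots> \<longleftrightarrow> 2*p < a" by (rule of_int_less_iff)
    finally show ?thesis .
  qed
  have 2: "real_of_int a / 2 < real_of_int p + 1 \<longleftrightarrow> a < 2*p+2"
  proof -
    have "real_of_int a / 2 < real_of_int p + 1 \<longleftrightarrow> real_of_int a < real_of_int (2*p+2)" by (simp add: mult.commute)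
    also have "\<dots> \<longleftrightarrow> a < 2*p+2" by (rule of_int_less_iff)
    finally show ?thesis .
  qed
  show ?thesis unfolding 1 2 by presburger
qed

lemma SC_PB: "pt (1/2) (1/2) (1/2) \<in> split_closure (1 + total_q 1 qq)
   (binarized 1 1 qq (\<lambda>_. BB) PP) (I_B 1 1 qq - {1..1})"
proof -
  let ?X = "binarized 1 1 qq (\<lambda>_. BB) PP"
  have e: "1 + total_q 1 qq = 3" by (simp add: total_q_def qq_def)
  have I: "I_B 1 1 qq - {1..1} = {2..3}" by (auto simp: I_B_def e[simplified] total_q_def qq_def)
  show ?thesis unfolding split_closure_def e I
  proof (rule InterI, clarify)
    fix \<pi> :: "nat \<Rightarrow> int" and \<pi>0 :: int
    assume "\<forall>j\<in>{1..3}. j \<notin> {2..3} \<longrightarrow> \<pi> j = 0"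
    then have p1: "\<pi> 1 = 0" by auto
    define L where "L = (\<lambda>y::nat\<Rightarrow>real. \<Sum>j=1..3. real_of_int (\<pi> j) * y j)"
    have Lpt: "L (pt x a c) = real_of_int (\<pi> 2) * a + real_of_int (\<pi> 3) * c" for x a c
      unfolding L_def sum3 using p1 by simp
    define St where "St = {y. real_of_int \<pi>0 < L y \<and> L y < real_of_int \<pi>0 + 1}"
    have Lc: "L (pt (1/2) (1/2) (1/2)) = real_of_int (\<pi> 2 + \<pi> 3) / 2" by (simp add: Lpt)
    have La: "L (pt (1/2) 0 (1/2)) = real_of_int (\<pi> 3) / 2" by (simp add: Lpt)
    have Lb: "L (pt (1/2) 1 (1/2)) = real_of_int (2 * \<pi> 2 + \<pi> 3) / 2" by (simp add: Lpt)
    have Ld: "L (pt (1/2) (1/2) 0) = real_of_int (\<pi> 2) / 2" by (simp add: Lpt)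
    have Le: "L (pt (1/2) (1/2) 1) = real_of_int (\<pi> 2 + 2 * \<pi> 3) / 2" by (simp add: Lpt)
    have mem: "pt (1/2) a c \<in> ?X - St" if "pt (1/2) a c \<in> BB" "pt (1/2) a c \<notin> St" for a c
      using in_PB that by blast
    have "pt (1/2) (1/2) (1/2) \<in> conv (?X - St)"
    proof (cases "pt (1/2) (1/2) (1/2) \<in> St")
      case False
      then show ?thesis using mem[OF B0] in_conv by blast
    next
      case True
      then have s: "\<pi> 2 + \<pi> 3 = 2 * \<pi>0 + 1" unfolding St_def mem_Collect_eq Lc using half_strip by blast
      show ?thesis
      proof (cases "\<pi> 2 = 0")
        case False
        have "\<pi> 3 \<noteq> 2 * \<pi>0 + 1" "2 * \<pi> 2 + \<pi> 3 \<noteq> 2 * \<pi>0 + 1" using False s by linarith+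
        then have "pt (1/2) 0 (1/2) \<notin> St" "pt (1/2) 1 (1/2) \<notin> St"
          unfolding St_def mem_Collect_eq La Lb using half_strip by blast+
        then have "pt (1/2) 0 (1/2) \<in> ?X - St" "pt (1/2) 1 (1/2) \<in> ?X - St" using mem B1 B2 by blast+
        then have "(\<lambda>j. pt (1/2) 0 (1/2) j / 2 + pt (1/2) 1 (1/2) j / 2) \<in> conv (?X - St)"
          by (intro mid_conv) (simp_all add: pt_eq_iff)
        then show ?thesis by (simp add: pt_mid)
      next
        case True
        have "\<pi> 2 \<noteq> 2 * \<pi>0 + 1" "\<pi> 2 + 2 * \<pi> 3 \<noteq> 2 * \<pi>0 + 1" using True s by presburger+
        then have "pt (1/2) (1/2) 0 \<notin> St" "pt (1/2) (1/2) 1 \<notin> St"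
          unfolding St_def mem_Collect_eq Ld Le using half_strip by blast+
        then have "pt (1/2) (1/2) 0 \<in> ?X - St" "pt (1/2) (1/2) 1 \<in> ?X - St" using mem B3 B4 by blast+
        then have "(\<lambda>j. pt (1/2) (1/2) 0 j / 2 + pt (1/2) (1/2) 1 j / 2) \<in> conv (?X - St)"
          by (intro mid_conv) (simp_all add: pt_eq_iff)
        then show ?thesis by (simp add: pt_mid)
      qed
    qed
    then show "pt (1/2) (1/2) (1/2) \<in> conv (?X - {y. real_of_int \<pi>0 < (\<Sum>j = 1..3. real_of_int (\<pi> j) * y j) \<and>
                (\<Sum>j = 1..3. real_of_int (\<pi> j) * y j) < real_of_int \<pi>0 + 1})"
      unfolding St_def L_def .
  qed
qed

theorem proposition1:
  shows "\<exists>(n::nat) (l::nat) (u::nat \<Rightarrow> nat) (m::nat) (A::nat \<Rightarrow> nat \<Rightarrow> real) (b::nat \<Rightarrow> real)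
            (q::nat \<Rightarrow> nat) (B::nat \<Rightarrow> (nat \<Rightarrow> real) set).
     1 \<le> l \<and> l \<le> n \<and>
     (\<forall>k\<in>{1..m}. b k \<in> \<rat> \<and> (\<forall>j\<in>{1..n}. A k j \<in> \<rat>)) \<and>
     (\<forall>i\<in>{1..l}. 0 < u i \<and> 0 < q i \<and> binarization_polytope (q i) (u i) (B i)
                  \<and> \<not> affine_binarization (q i) (B i)) \<and>
     split_closure n (polyhedron_P n l u m A b) {1..l}
       \<subset> proj n (split_closure (n + total_q l q)
                   (binarized n l q B (polyhedron_P n l u m A b))
                   (I_B n l q - {1..l}))"
proof (intro exI conjI)
  show "1 \<le> (1::nat)" "1 \<le> (1::nat)" by simp_all
  show "\<forall>k\<in>{1..2}. bb k \<in> \<rat> \<and> (\<forall>j\<in>{1..1}. AA k j \<in> \<rat>)"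
    by (auto simp: AA_def bb_def)
  show "\<forall>i\<in>{1..1}. 0 < uu i \<and> 0 < qq i \<and> binarization_polytope (qq i) (uu i) BB
                  \<and> \<not> affine_binarization (qq i) BB"
    using binBB nonaff by (simp add: uu_def qq_def)
  have ne: "proj 1 (split_closure (1 + total_q 1 qq) (binarized 1 1 qq (\<lambda>_. BB) PP) (I_B 1 1 qq - {1..1})) \<noteq> {}"
    using SC_PB unfolding proj_def by blast
  show "split_closure 1 (polyhedron_P 1 1 uu 2 AA bb) {1..1}
       \<subset> proj 1 (split_closure (1 + total_q 1 qq)
                   (binarized 1 1 qq (\<lambda>_. BB) (polyhedron_P 1 1 uu 2 AA bb))
                   (I_B 1 1 qq - {1..1}))"
    using SC_P_empty ne unfolding PP_def by auto
qed
end
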